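(* Let $\alpha$ be an implicational formula that is a tautology of Propositional Minimal Implicational Logic. Then there is a proof of $\Rightarrow\alpha$ in the sequent calculus $\mathbf{LJ}^{\rightarrow}$ (without cut) of height at most $|\alpha|\cdot 2^{|\alpha|+1}$.
   Context: Formulas are built from atoms using only $\rightarrow$; $|\alpha|$ denotes the degree of $\alpha$, i.e. the number of occurrences of atomic symbols and connectives in $\alpha$. A formula is a tautology iff it is forced at every world of every Kripke model $\langle U,\preceq,\mathcal V\rangle$ ($\preceq$ a partial order, $\mathcal V$ monotone; $\alpha_1\rightarrow\alpha_2$ forced at $i$ iff for all $j\succeq i$, if $\alpha_1$ forced at $j$ then $\alpha_2$ forced at $j$). $\mathbf{LJ}^{\rightarrow}$ has sequents $\Delta\Rightarrow\gamma$ with exactly one formula on the right and rules: axiom $\Delta,\gamma\Rightarrow\gamma$; weakening, contraction and exchange on the left; $\rightarrow$-right: from $\Delta,\alpha\Rightarrow\beta$ infer $\Delta\Rightarrow\alpha\rightarrow\beta$; $\rightarrow$-left: from $\Delta,\alpha\rightarrow\beta\Rightarrow\alpha$ and $\Delta,\alpha\rightarrow\beta,\beta\Rightarrow\gamma$ infer $\Delta,\alpha\rightarrow\beta\Rightarrow\gamma$. *)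

theory Defs
  imports Main
begin

datatype 'a form = Atom 'a | Imp "'a form" "'a form"

fun deg :: "'a form \<Rightarrow> nat" where
  "deg (Atom p) = 1"
| "deg (Imp a b) = deg a + deg b + 1"

definition kripke_model :: "'w set \<Rightarrow> ('w \<Rightarrow> 'w \<Rightarrow> bool) \<Rightarrow> ('w \<Rightarrow> 'a \<Rightarrow> bool) \<Rightarrow> bool" where
  "kripke_model U le V \<longleftrightarrow>
     (\<forall>i\<in>U. le i i) \<and>
     (\<forall>i\<in>U. \<forall>j\<in>U. \<forall>k\<in>U. le i j \<longrightarrow> le j k \<longrightarrow> le i k) \<and>
     (\<forall>i\<in>U. \<forall>j\<in>U. le i j \<longrightarrow> le j i \<longrightarrow> i = j) \<and>
     (\<forall>i\<in>U. \<forall>j\<in>U. \<forall>p. le i j \<longrightarrow> V i p \<longrightarrow> V j p)"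

fun forces :: "'w set \<Rightarrow> ('w \<Rightarrow> 'w \<Rightarrow> bool) \<Rightarrow> ('w \<Rightarrow> 'a \<Rightarrow> bool) \<Rightarrow> 'w \<Rightarrow> 'a form \<Rightarrow> bool" where
  "forces U le V i (Atom p) = V i p"
| "forces U le V i (Imp a b) =
     (\<forall>j\<in>U. le i j \<longrightarrow> forces U le V j a \<longrightarrow> forces U le V j b)"

text \<open>Tautology: forced at every world of every Kripke model (worlds drawn from nat;
  HOL cannot quantify over all types inside a formula).\<close>
definition tautology :: "'a form \<Rightarrow> bool" where
  "tautology \<alpha> \<longleftrightarrow>
     (\<forall>(U::nat set) le V. kripke_model U le V \<longrightarrow> (\<forall>i\<in>U. forces U le V i \<alpha>))"

inductive LJ :: "'a form list \<Rightarrow> 'a form \<Rightarrow> nat \<Rightarrow> bool" where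
  ax: "LJ (\<Delta> @ [\<gamma>]) \<gamma> 0"
| weak: "LJ \<Delta> \<gamma> n \<Longrightarrow> LJ (\<Delta> @ [\<beta>]) \<gamma> (Suc n)"
| contr: "LJ (\<Delta> @ [\<beta>, \<beta>]) \<gamma> n \<Longrightarrow> LJ (\<Delta> @ [\<beta>]) \<gamma> (Suc n)"
| exch: "LJ (\<Delta>1 @ [\<beta>1, \<beta>2] @ \<Delta>2) \<gamma> n \<Longrightarrow> LJ (\<Delta>1 @ [\<beta>2, \<beta>1] @ \<Delta>2) \<gamma> (Suc n)"
| impR: "LJ (\<Delta> @ [\<alpha>]) \<beta> n \<Longrightarrow> LJ \<Delta> (Imp \<alpha> \<beta>) (Suc n)"
| impL: "LJ (\<Delta> @ [Imp \<alpha> \<beta>]) \<alpha> n \<Longrightarrow> LJ (\<Delta> @ [Imp \<alpha> \<beta>, \<beta>]) \<gamma> m \<Longrightarrow>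
         LJ (\<Delta> @ [Imp \<alpha> \<beta>]) \<gamma> (Suc (max n m))"

end

theory Submission imports Defs begin

inductive P :: "'a form set \<Rightarrow> 'a form \<Rightarrow> nat \<Rightarrow> bool" where
  pax: "\<gamma> \<in> S \<Longrightarrow> P S \<gamma> k"
| pR: "P (insert a S) b k \<Longrightarrow> P S (Imp a b) (Suc k)"
| pL: "Imp a b \<in> S \<Longrightarrow> b \<notin> S \<Longrightarrow> P S a k \<Longrightarrow> P (insert b S) \<gamma> k \<Longrightarrow> P S \<gamma> (Suc k)"

lemma P_mono: "P S \<gamma> k \<Longrightarrow> k \<le> k' \<Longrightarrow> P S \<gamma> k'"
proof (induction arbitrary: k' rule: P.induct)
  case (pax \<gamma> S k)
  then show ?case by (simp add: P.pax)
next
  case (pR a S b k)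
  then obtain k'' where "k' = Suc k''" "k \<le> k''" by (cases k') auto
  then show ?case using pR by (auto intro: P.pR)
next
  case (pL a b S k \<gamma>)
  then obtain k'' where "k' = Suc k''" "k \<le> k''" by (cases k') auto
  then show ?case using pL by (auto intro: P.pL)
qed

lemma LJ_ax: "LJ (ys @ [\<gamma>] @ zs) \<gamma> (length zs)"
proof (induction zs rule: rev_induct)
  case Nil
  then show ?case using LJ.ax[of ys \<gamma>] by simp
next
  case (snoc z zs)
  then show ?case using LJ.weak[of "ys @ [\<gamma>] @ zs" \<gamma> "length zs" z] by simp
qed

lemma LJ_ax': "\<gamma> \<in> set xs \<Longrightarrow> \<exists>h. LJ xs \<gamma> h \<and> h + 1 \<le> length xs"
proof -
  assume "\<gamma> \<in> set xs"
  then obtain ys zs where "xs = ys @ [\<gamma>] @ zs" using split_list by fastforce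
  then show ?thesis using LJ_ax[of ys \<gamma> zs] by auto
qed

lemma LJ_move: "LJ (ys @ zs @ [x]) \<gamma> h \<Longrightarrow> LJ (ys @ [x] @ zs) \<gamma> (h + length zs)"
proof (induction zs arbitrary: ys)
  case Nil
  then show ?case by simp
next
  case (Cons z zs)
  have "LJ ((ys @ [z]) @ [x] @ zs) \<gamma> (h + length zs)" using Cons.IH[of "ys @ [z]"] Cons.prems by simp
  then have "LJ (ys @ [x, z] @ zs) \<gamma> (Suc (h + length zs))"
    using LJ.exch[of ys z x zs \<gamma>] by simp
  then show ?case by simp
qed

locale subf =
  fixes Sb :: "'a form set"
  assumes fin: "finite Sb"
    and clo: "Imp a b \<in> Sb \<Longrightarrow> a \<in> Sb \<and> b \<in> Sb"
begin

definition s where "s = card Sb"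

lemma translate:
  "P S \<gamma> k \<Longrightarrow> S \<subseteq> Sb \<Longrightarrow> \<gamma> \<in> Sb \<Longrightarrow> distinct xs \<Longrightarrow> set xs = S \<Longrightarrow>
   \<exists>h. LJ xs \<gamma> h \<and> h + 1 \<le> k * max 2 s + s"
proof (induction arbitrary: xs rule: P.induct)
  case (pax \<gamma> S k)
  have "length xs = card S" using pax.prems(3,4) distinct_card by metis
  moreover have "card S \<le> s" unfolding s_def using pax.prems(1) card_mono fin by metis
  moreover obtain h where h: "LJ xs \<gamma> h" "h + 1 \<le> length xs" using LJ_ax'[of \<gamma> xs] pax.hyps pax.prems(4) by blast
  ultimately have "h + 1 \<le> k * max 2 s + s" by linarith
  then have "LJ xs \<gamma> h \<and> h + 1 \<le> k * max 2 s + s" using h(1) by simp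
  then show ?case by (rule exI)
next
  case (pR a S b k)
  have ab: "a \<in> Sb" "b \<in> Sb" using clo[OF pR.prems(2)] by auto
  show ?case
  proof (cases "a \<in> S")
    case True
    then have "insert a S = S" by auto
    then have "insert a S \<subseteq> Sb" "set xs = insert a S" using pR.prems by auto
    then obtain h where h: "LJ xs b h" "h + 1 \<le> k * max 2 s + s"
      using pR.IH[of xs] pR.prems(3) ab by blast
    have "LJ (xs @ [a]) b (Suc h)" by (rule LJ.weak[OF h(1)])
    then have "LJ xs (Imp a b) (Suc (Suc h))" by (rule LJ.impR)
    moreover have "Suc k * max 2 s = k * max 2 s + max 2 s" "2 \<le> max 2 s" by simp_all
    moreover have "Suc (Suc h) + 1 \<le> Suc k * max 2 s + s" using h(2) calculation(2,3) by linarith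
    ultimately show ?thesis by blast
  next
    case False
    have "insert a S \<subseteq> Sb" "distinct (xs @ [a])" "set (xs @ [a]) = insert a S"
      using pR.prems False ab by auto
    then obtain h where h: "LJ (xs @ [a]) b h" "h + 1 \<le> k * max 2 s + s"
      using pR.IH[of "xs @ [a]"] ab by blast
    have "LJ xs (Imp a b) (Suc h)" by (rule LJ.impR[OF h(1)])
    moreover have "Suc k * max 2 s = k * max 2 s + max 2 s" "2 \<le> max 2 s" by simp_all
    moreover have "Suc h + 1 \<le> Suc k * max 2 s + s" using h(2) calculation(2,3) by linarith
    ultimately show ?thesis by blast
  qed
next
  case (pL a b S k \<gamma>)
  have ab: "a \<in> Sb" "b \<in> Sb" using clo[of a b] pL.hyps(1) pL.prems(1) by blast+
  have "Imp a b \<in> set xs" using pL.hyps(1) pL.prems(4) by simp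
  then obtain ys zs where xs: "xs = ys @ [Imp a b] @ zs" using split_list by fastforce
  define xs' where "xs' = ys @ zs @ [Imp a b]"
  have d': "distinct xs'" "set xs' = S" using pL.prems(3,4) xs unfolding xs'_def by auto
  obtain h1 where h1: "LJ xs' a h1" "h1 + 1 \<le> k * max 2 s + s" using pL.IH(1)[OF pL.prems(1) ab(1) d'] by blast
  have d'': "distinct (xs' @ [b])" "set (xs' @ [b]) = insert b S" "insert b S \<subseteq> Sb"
    using d' pL.hyps(2) pL.prems(1) ab by auto
  obtain h2 where h2: "LJ (xs' @ [b]) \<gamma> h2" "h2 + 1 \<le> k * max 2 s + s"
    using pL.IH(2)[OF d''(3) pL.prems(2) d''(1,2)] by blast
  have "LJ ((ys @ zs) @ [Imp a b]) \<gamma> (Suc (max h1 h2))"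
    using LJ.impL[of "ys @ zs" a b h1 \<gamma> h2] h1 h2 unfolding xs'_def by simp
  then have "LJ (ys @ [Imp a b] @ zs) \<gamma> (Suc (max h1 h2) + length zs)"
    using LJ_move[of ys zs "Imp a b" \<gamma> "Suc (max h1 h2)"] by simp
  moreover have "length xs = card S" using pL.prems(3,4) distinct_card by metis
  moreover have "card (insert b S) \<le> s" unfolding s_def using d''(3) card_mono fin by metis
  moreover have "finite S" using pL.prems(1) fin finite_subset by metis
  ultimately have lz: "length zs + 2 \<le> s" using xs pL.hyps(2) by simp
  have "Suc k * max 2 s + s = k * max 2 s + s + max 2 s" by simp
  then have "Suc (max h1 h2) + length zs + 1 \<le> Suc k * max 2 s + s"
    using lz h1(2) h2(2) by linarith
  then show ?case using \<open>LJ (ys @ [Imp a b] @ zs) \<gamma> (Suc (max h1 h2) + length zs)\<close> xs by blast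
qed


definition F where "F S = (card (Sb - S) + 1) * s"

lemma F_strict: "S \<subset> T \<Longrightarrow> T \<subseteq> Sb \<Longrightarrow> F T \<le> card (Sb - S) * s"
proof -
  assume st: "S \<subset> T" "T \<subseteq> Sb"
  then have "Sb - T \<subset> Sb - S" by blast
  then have "card (Sb - T) < card (Sb - S)" using fin by (meson finite_Diff psubset_card_mono)
  then have "card (Sb - T) + 1 \<le> card (Sb - S)" by simp
  then show ?thesis unfolding F_def by (rule mult_le_mono1)
qed

lemma F_mono: "S \<subseteq> T \<Longrightarrow> F T \<le> F S"
proof -
  assume "S \<subseteq> T"
  then have "card (Sb - T) \<le> card (Sb - S)" using fin by (meson Diff_mono card_mono finite_Diff order_refl)
  then show ?thesis unfolding F_def by simp
qed

lemma P_inv: "P S \<gamma> (Suc k) \<Longrightarrow> \<gamma> \<in> S \<or> (\<exists>a b. \<gamma> = Imp a b \<and> P (insert a S) b k) \<or>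
   (\<exists>a b. Imp a b \<in> S \<and> b \<notin> S \<and> P S a k \<and> P (insert b S) \<gamma> k)"
  by (erule P.cases) auto

lemma step:
  assumes S: "S \<subseteq> Sb"
    and IH: "\<And>T \<gamma> k. S \<subset> T \<Longrightarrow> T \<subseteq> Sb \<Longrightarrow> \<gamma> \<in> Sb \<Longrightarrow> F T \<le> k \<Longrightarrow> P T \<gamma> k \<Longrightarrow> P T \<gamma> (F T)"
    and kc: "card (Sb - S) * s \<le> k"
    and st: "\<forall>\<gamma>\<in>Sb. P S \<gamma> (Suc k) \<longrightarrow> P S \<gamma> k"
  shows "\<forall>\<gamma>\<in>Sb. P S \<gamma> (Suc (Suc k)) \<longrightarrow> P S \<gamma> (Suc k)"
proof (intro ballI impI)
  fix \<gamma> assume g: "\<gamma> \<in> Sb" and p: "P S \<gamma> (Suc (Suc k))"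
  have sup: "P T \<delta> k" if "S \<subset> T" "T \<subseteq> Sb" "\<delta> \<in> Sb" "P T \<delta> (Suc k)" for T \<delta>
  proof -
    have "F T \<le> k" using F_strict[OF that(1,2)] kc by linarith
    then have "F T \<le> Suc k" by simp
    then have "P T \<delta> (F T)" using IH[OF that(1,2,3) _ that(4)] by blast
    then show ?thesis using P_mono \<open>F T \<le> k\<close> by blast
  qed
  from P_inv[OF p] show "P S \<gamma> (Suc k)"
  proof (elim disjE exE conjE)
    assume "\<gamma> \<in> S" then show ?thesis by (rule P.pax)
  next
    fix a b assume ga: "\<gamma> = Imp a b" and pa: "P (insert a S) b (Suc k)"
    have ab: "a \<in> Sb" "b \<in> Sb" using clo[of a b] g ga by blast+
    show ?thesis
    proof (cases "a \<in> S")
      case True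
      then have "P S b (Suc k)" using pa by (simp add: insert_absorb)
      then have "P S b k" using st ab by blast
      then have "P (insert a S) b k" using True by (simp add: insert_absorb)
      then show ?thesis unfolding ga by (rule P.pR)
    next
      case False
      then have "S \<subset> insert a S" "insert a S \<subseteq> Sb" using S ab by auto
      then have "P (insert a S) b k" using sup ab pa by blast
      then show ?thesis unfolding ga by (rule P.pR)
    qed
  next
    fix a b assume h1: "Imp a b \<in> S" and h2: "b \<notin> S" and h3: "P S a (Suc k)"
      and h4: "P (insert b S) \<gamma> (Suc k)"
    have ab: "a \<in> Sb" "b \<in> Sb" using clo[of a b] h1 S by blast+
    have "P S a k" using st ab h3 by blast
    moreover have "S \<subset> insert b S" "insert b S \<subseteq> Sb" using S ab h2 by auto
    then have "P (insert b S) \<gamma> k" using sup g h4 by blast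
    ultimately show ?thesis using P.pL[OF h1 h2] by blast
  qed
qed

lemma pigeon:
  fixes A :: "nat \<Rightarrow> 'b set"
  assumes "finite B" "\<And>j. A j \<subseteq> A (Suc j)" "\<And>j. A j \<subseteq> B"
  shows "\<exists>j \<le> card B. A (Suc j) = A j"
proof (rule ccontr)
  assume "\<not> ?thesis"
  then have ne: "\<And>j. j \<le> card B \<Longrightarrow> A (Suc j) \<noteq> A j" by blast
  have "j \<le> card (A j)" if "j \<le> Suc (card B)" for j
    using that
  proof (induction j)
    case 0 then show ?case by simp
  next
    case (Suc j)
    have "A j \<subset> A (Suc j)" using assms(2)[of j] ne[of j] Suc.prems by auto
    moreover have "finite (A (Suc j))" using assms(1,3) finite_subset by metis
    ultimately have "card (A j) < card (A (Suc j))" by (rule psubset_card_mono[rotated])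
    then show ?case using Suc by simp
  qed
  then have "Suc (card B) \<le> card (A (Suc (card B)))" by simp
  moreover have "card (A (Suc (card B))) \<le> card B" using assms(1,3) card_mono by metis
  ultimately show False by simp
qed

lemma stable: "S \<subseteq> Sb \<Longrightarrow> \<gamma> \<in> Sb \<Longrightarrow> F S \<le> k \<Longrightarrow> P S \<gamma> k \<Longrightarrow> P S \<gamma> (F S)"
proof (induction "card (Sb - S)" arbitrary: S \<gamma> k rule: less_induct)
  case less
  define c where "c = card (Sb - S) * s"
  have IH: "\<And>T \<gamma> k. S \<subset> T \<Longrightarrow> T \<subseteq> Sb \<Longrightarrow> \<gamma> \<in> Sb \<Longrightarrow> F T \<le> k \<Longrightarrow> P T \<gamma> k \<Longrightarrow> P T \<gamma> (F T)"
  proof -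
    fix T \<gamma> k assume a: "S \<subset> T" "T \<subseteq> Sb" "\<gamma> \<in> Sb" "F T \<le> k" "P T \<gamma> k"
    have "Sb - T \<subset> Sb - S" using a(1,2) by blast
    then have "card (Sb - T) < card (Sb - S)" using fin by (meson finite_Diff psubset_card_mono)
    then show "P T \<gamma> (F T)" using less.hyps a(2-5) by blast
  qed
  define A where "A j = {\<delta> \<in> Sb. P S \<delta> (c + j)}" for j
  have "\<exists>j \<le> card Sb. A (Suc j) = A j"
  proof (rule pigeon[OF fin])
    show "A j \<subseteq> A (Suc j)" for j unfolding A_def using P_mono by fastforce
    show "A j \<subseteq> Sb" for j unfolding A_def by blast
  qed
  then obtain j where j: "j \<le> s" "A (Suc j) = A j" unfolding s_def by blast
  have st0: "\<forall>\<delta>\<in>Sb. P S \<delta> (Suc (c + j)) \<longrightarrow> P S \<delta> (c + j)"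
    using j(2) unfolding A_def by (auto simp: set_eq_iff)
  have prp: "\<forall>\<delta>\<in>Sb. P S \<delta> (Suc (c + j + i)) \<longrightarrow> P S \<delta> (c + j + i)" for i
  proof (induction i)
    case 0 then show ?case using st0 by simp
  next
    case (Suc i)
    have "\<forall>\<delta>\<in>Sb. P S \<delta> (Suc (Suc (c + j + i))) \<longrightarrow> P S \<delta> (Suc (c + j + i))"
      using step[OF less.prems(1) IH _ Suc.IH] c_def by simp
    then show ?case by simp
  qed
  have bck: "\<forall>\<delta>\<in>Sb. P S \<delta> (c + j + i) \<longrightarrow> P S \<delta> (c + j)" for i
  proof (induction i)
    case 0 then show ?case by simp
  next
    case (Suc i)
    then show ?case using prp[of i] by simp
  qed
  have FS: "F S = c + s" unfolding F_def c_def by simp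
  then have "k = c + j + (k - c - j)" using less.prems(3) j(1) by simp
  then have "P S \<gamma> (c + j)" using bck[of "k - c - j"] less.prems(2,4) by metis
  then show ?case using P_mono[of S \<gamma> "c + j" "c + s"] FS j(1) by simp
qed

definition prov where "prov S \<gamma> = P S \<gamma> (F S)"
definition sat where "sat T = (\<forall>a b. Imp a b \<in> T \<longrightarrow> b \<in> T \<or> \<not> prov T a)"

lemma provR: "S \<subseteq> Sb \<Longrightarrow> Imp a b \<in> Sb \<Longrightarrow> prov (insert a S) b \<Longrightarrow> prov S (Imp a b)"
proof -
  assume a: "S \<subseteq> Sb" "Imp a b \<in> Sb" "prov (insert a S) b"
  have "P S (Imp a b) (Suc (F (insert a S)))" using a(3) unfolding prov_def by (rule P.pR)
  moreover have "F (insert a S) \<le> F S" by (rule F_mono) blast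
  ultimately have "P S (Imp a b) (Suc (F S))" using P_mono Suc_le_mono by blast
  then show ?thesis unfolding prov_def by (rule stable[OF a(1,2), rotated]) simp
qed

lemma provL: "S \<subseteq> Sb \<Longrightarrow> Imp a b \<in> S \<Longrightarrow> b \<notin> S \<Longrightarrow> c \<in> Sb \<Longrightarrow> prov S a \<Longrightarrow> prov (insert b S) c \<Longrightarrow> prov S c"
proof -
  assume a: "S \<subseteq> Sb" "Imp a b \<in> S" "b \<notin> S" "c \<in> Sb" "prov S a" "prov (insert b S) c"
  have "F (insert b S) \<le> F S" by (rule F_mono) blast
  then have "P (insert b S) c (F S)" using a(6) P_mono unfolding prov_def by blast
  then have "P S c (Suc (F S))" using P.pL[OF a(2,3)] a(5) unfolding prov_def by blast
  then show ?thesis unfolding prov_def by (rule stable[OF a(1,4), rotated]) simp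
qed

lemma saturate: "U \<subseteq> Sb \<Longrightarrow> c \<in> Sb \<Longrightarrow> \<not> prov U c \<Longrightarrow> \<exists>T. U \<subseteq> T \<and> T \<subseteq> Sb \<and> sat T \<and> \<not> prov T c"
proof (induction "card (Sb - U)" arbitrary: U rule: less_induct)
  case less
  show ?case
  proof (cases "sat U")
    case True then show ?thesis using less.prems by blast
  next
    case False
    then obtain a b where ab: "Imp a b \<in> U" "b \<notin> U" "prov U a" unfolding sat_def by blast
    have b: "b \<in> Sb" using clo[of a b] ab(1) less.prems(1) by blast
    have np: "\<not> prov (insert b U) c" using provL[OF less.prems(1) ab(1,2) less.prems(2) ab(3)] less.prems(3) by blast
    have "Sb - insert b U \<subset> Sb - U" using b ab(2) by blast
    then have "card (Sb - insert b U) < card (Sb - U)" using fin by (meson finite_Diff psubset_card_mono)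
    moreover have "insert b U \<subseteq> Sb" using b less.prems(1) by blast
    ultimately obtain T where "insert b U \<subseteq> T" "T \<subseteq> Sb" "sat T" "\<not> prov T c"
      using less.hyps[of "insert b U"] less.prems(2) np by blast
    then show ?thesis by blast
  qed
qed

lemma countermodel:
  assumes "\<not> prov {} \<alpha>" "\<alpha> \<in> Sb"
  shows "\<not> tautology \<alpha>"
proof -
  define W where "W = {T. T \<subseteq> Sb \<and> sat T}"
  have "finite W" unfolding W_def using fin by simp
  then obtain g where g: "bij_betw g {0..<card W} W" using ex_bij_betw_nat_finite by blast
  define UU where "UU = {0..<card W}"
  define le where "le = (\<lambda>i j. g i \<subseteq> g j)"
  define V where "V = (\<lambda>i p. Atom p \<in> g i)"
  have gW: "g i \<in> W" if "i \<in> UU" for i using bij_betwE[OF g] that unfolding UU_def by blast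
  have Wg: "\<exists>j\<in>UU. g j = T" if "T \<in> W" for T
  proof -
    have "g ` UU = W" using bij_betw_imp_surj_on[OF g] unfolding UU_def .
    then show ?thesis using that by blast
  qed
  have ginj: "i = j" if "i \<in> UU" "j \<in> UU" "g i = g j" for i j
    using inj_onD[OF bij_betw_imp_inj_on[OF g]] that unfolding UU_def by blast
  have km: "kripke_model UU le V"
    unfolding kripke_model_def le_def V_def
  proof (intro conjI ballI allI impI)
    fix i j assume "i \<in> UU" "j \<in> UU" "g i \<subseteq> g j" "g j \<subseteq> g i"
    then show "i = j" using ginj by blast
  qed auto
  have truth: "(\<delta> \<in> g i \<longrightarrow> forces UU le V i \<delta>) \<and> (\<not> prov (g i) \<delta> \<longrightarrow> \<not> forces UU le V i \<delta>)"
    if "\<delta> \<in> Sb" "i \<in> UU" for \<delta> i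
    using that
  proof (induction \<delta> arbitrary: i)
    case (Atom p)
    have "\<not> prov (g i) (Atom p) \<Longrightarrow> Atom p \<notin> g i" unfolding prov_def using P.pax by blast
    then show ?case by (simp add: V_def)
  next
    case (Imp a b)
    have ab: "a \<in> Sb" "b \<in> Sb" using clo[of a b] Imp.prems(1) by blast+
    have giW: "g i \<subseteq> Sb" "sat (g i)" using gW[OF Imp.prems(2)] unfolding W_def by auto
    have one: "forces UU le V i (Imp a b)" if m: "Imp a b \<in> g i"
    proof -
      have "forces UU le V j b" if j: "j \<in> UU" "le i j" "forces UU le V j a" for j
      proof -
        have "Imp a b \<in> g j" using m j(2) unfolding le_def by blast
        moreover have "sat (g j)" using gW[OF j(1)] unfolding W_def by auto
        ultimately have "b \<in> g j \<or> \<not> prov (g j) a" unfolding sat_def by blast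
        then show ?thesis using Imp.IH(1)[OF ab(1) j(1)] Imp.IH(2)[OF ab(2) j(1)] j(3) by blast
      qed
      then show ?thesis by simp
    qed
    have two: "\<not> forces UU le V i (Imp a b)" if np: "\<not> prov (g i) (Imp a b)"
    proof -
      have "\<not> prov (insert a (g i)) b" using provR[OF giW(1) Imp.prems(1)] np by blast
      moreover have "insert a (g i) \<subseteq> Sb" using ab(1) giW(1) by simp
      ultimately obtain T where T: "insert a (g i) \<subseteq> T" "T \<subseteq> Sb" "sat T" "\<not> prov T b"
        using saturate[OF _ ab(2)] by meson
      then have "T \<in> W" unfolding W_def by blast
      then obtain j where j: "j \<in> UU" "g j = T" using Wg by blast
      have "forces UU le V j a" using Imp.IH(1)[OF ab(1) j(1)] T(1) j(2) by blast
      moreover have "\<not> forces UU le V j b" using Imp.IH(2)[OF ab(2) j(1)] T(4) j(2) by blast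
      moreover have "le i j" unfolding le_def using T(1) j(2) by blast
      ultimately show ?thesis using j(1) by auto
    qed
    show ?case using one two by blast
  qed
  obtain T where T: "T \<subseteq> Sb" "sat T" "\<not> prov T \<alpha>" using saturate[of "{}" \<alpha>] assms by blast
  then obtain j where j: "j \<in> UU" "g j = T" using Wg unfolding W_def by blast
  have "\<not> forces UU le V j \<alpha>" using truth[OF assms(2) j(1)] T(3) j(2) by blast
  then show ?thesis unfolding tautology_def using km j(1) by blast
qed

end

fun sub :: "'a form \<Rightarrow> 'a form set" where
  "sub (Atom p) = {Atom p}"
| "sub (Imp a b) = insert (Imp a b) (sub a \<union> sub b)"

lemma sub_fin: "finite (sub \<alpha>)" by (induction \<alpha>) auto

lemma sub_card: "card (sub \<alpha>) \<le> deg \<alpha>"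
proof (induction \<alpha>)
  case (Atom p) then show ?case by simp
next
  case (Imp a b)
  have "card (sub (Imp a b)) \<le> card (sub a \<union> sub b) + 1" by (simp add: card_insert_le_m1 card_insert_if sub_fin)
  also have "\<dots> \<le> card (sub a) + card (sub b) + 1" using card_Un_le by simp
  finally show ?case using Imp by simp
qed

lemma sub_self: "\<alpha> \<in> sub \<alpha>" by (cases \<alpha>) auto

lemma sub_clo: "Imp a b \<in> sub \<alpha> \<Longrightarrow> a \<in> sub \<alpha> \<and> b \<in> sub \<alpha>"
  by (induction \<alpha>) (auto simp: sub_self)

lemma pow_bound: "2 \<le> n \<Longrightarrow> n * n + n + 1 \<le> (2::nat) ^ (n + 1)"
proof (induction n rule: nat_induct_at_least)
  case base then show ?case by simp
next
  case (Suc n)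
  have "2 * n \<le> n * n" using Suc.hyps by (intro mult_le_mono1)
  then have "Suc n \<le> n * n" using Suc.hyps by linarith
  then have "Suc n * Suc n + Suc n + 1 \<le> 2 * (n * n + n + 1)" by (simp add: algebra_simps)
  also have "\<dots> \<le> 2 * 2 ^ (n + 1)" using Suc.IH by simp
  finally show ?case by simp
qed

lemma num_bound: "(n + 1) * n * max 2 n + n \<le> n * 2 ^ (n + 1) + (1::nat)"
proof (cases "n \<le> 1")
  case True
  then have "n = 0 \<or> n = 1" by auto
  then show ?thesis by auto
next
  case False
  then have "max 2 n = n" by simp
  then have "(n + 1) * n * max 2 n + n = n * (n * n + n + 1)" by (simp add: algebra_simps)
  also have "\<dots> \<le> n * 2 ^ (n + 1)" using False by (intro mult_le_mono2 pow_bound) simp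
  finally show ?thesis by simp
qed

lemma num_bound2:
  assumes "s \<le> n" "h + 1 \<le> (s + 1) * s * max 2 s + s"
  shows "h \<le> n * 2 ^ (n + 1)"
proof -
  have "(s + 1) * s * max 2 s + s \<le> (n + 1) * n * max 2 n + n"
    using assms(1) by (intro add_mono mult_le_mono) auto
  then show ?thesis using num_bound[of n] assms(2) by linarith
qed

theorem theorem1:
  fixes \<alpha> :: "'a form"
  assumes "tautology \<alpha>"
  shows "\<exists>h. LJ [] \<alpha> h \<and> h \<le> deg \<alpha> * 2 ^ (deg \<alpha> + 1)"
proof -
  interpret subf "sub \<alpha>"
    by unfold_locales (auto simp: sub_fin dest: sub_clo)
  have "prov {} \<alpha>" using countermodel[OF _ sub_self] assms by blast
  then have "P {} \<alpha> (F {})" unfolding prov_def .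
  then obtain h where h: "LJ [] \<alpha> h" "h + 1 \<le> F {} * max 2 s + s"
    using translate[of "{}" \<alpha> "F {}" "[]"] sub_self by auto
  have "F {} = (s + 1) * s" unfolding F_def s_def by simp
  then have "h \<le> deg \<alpha> * 2 ^ (deg \<alpha> + 1)"
    using num_bound2[of s "deg \<alpha>" h] h(2) sub_card[of \<alpha>] unfolding s_def by simp
  then show ?thesis using h(1) by blast
qed

end
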